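(* For every $n\ge 2$, the Bigalke–Rollenske nilmanifold $X^{4n-2}$ admits balanced metrics.
   Context: Fix $n\ge2$. Let $G_n\subset GL(2n+2,\mathbb C)$ be the real nilpotent Lie group of upper triangular unipotent matrices parametrized by $x_1,\dots,x_{n-1},y_1,\dots,y_n,z_1,\dots,z_{n-1},w_1,\dots,w_n\in\mathbb C$ of the following shape (rows/columns indexed $1,\dots,2n+2$): row $1$ has entry $\bar y_1$ in column $2n+1$ and $w_1$ in column $2n+2$; for $k=2,\dots,n$, row $k$ has $\bar z_{k-1}$ in column $n+k-1$, $-x_{k-1}$ in column $n+k$ and $w_k$ in column $2n+2$; for $k=1,\dots,n$, row $n+k$ has $y_k$ in column $2n+2$; row $2n+1$ has $z_1$ in column $2n+2$; all other off-diagonal entries are $0$ and the diagonal entries are $1$. Let $\Gamma$ be the lattice of such matrices with entries in $\mathbb Z[i]$, and $X^{4n-2}=\Gamma\backslash G_n$, a compact complex manifold of complex dimension $4n-2$ with the left-invariant complex structure whose $(1,0)$-forms are spanned by the left-invariant co-frame $dx_j\,(1\le j\le n-1)$, $dy_j\,(1\le j\le n)$, $dz_j\,(1\le j\le n-1)$, $\omega_1=dw_1-\bar y_1dz_1$, $\omega_k=dw_k-\bar z_{k-1}dy_{k-1}+x_{k-1}dy_k$ $(k=2,\dots,n)$. These satisfy $d(dx_j)=d(dy_j)=d(dz_j)=0$, $\partial\omega_1=0$, $\bar\partial\omega_1=dz_1\wedge d\bar y_1$, and for $j=2,\dots,n$: $\partial\omega_j=dx_{j-1}\wedge dy_j$,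 $\bar\partial\omega_j=dy_{j-1}\wedge d\bar z_{j-1}$. A balanced metric on a complex manifold of complex dimension $N$ is a Hermitian metric whose fundamental form $\omega$ satisfies $d\omega^{N-1}=0$. *)

theory Defs
  imports Complex_Main
begin

text \<open>
  Left-invariant calculus on the nilmanifold X^{4n-2} = Gamma\G_n, modelled on the
  complexified dual of the Lie algebra.
  Basis of complex 1-forms: indices 0..N-1 are the (1,0)-forms of the given co-frame,
  index k+N is the conjugate of index k.  Layout of the (1,0)-coframe:
    dx_j (j=1..n-1)  at index j-1,
    dy_j (j=1..n)    at index n-2+j,
    dz_j (j=1..n-1)  at index 2n-2+j,
    omega_j (j=1..n) at index 3n-3+j.
  A (left-invariant, complex valued) form is a function assigning to every finite
  set I of indices the coefficient of e_I = e_{i1} ^ ... ^ e_{ik} (i1 < ... < ik).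
\<close>

type_synonym form = "nat set \<Rightarrow> complex"

definition cdim :: "nat \<Rightarrow> nat" where "cdim n = 4 * n - 2"

definition ix :: "nat \<Rightarrow> nat \<Rightarrow> nat" where "ix n j = j - 1"
definition iy :: "nat \<Rightarrow> nat \<Rightarrow> nat" where "iy n j = n - 2 + j"
definition iz :: "nat \<Rightarrow> nat \<Rightarrow> nat" where "iz n j = 2 * n - 2 + j"
definition iw :: "nat \<Rightarrow> nat \<Rightarrow> nat" where "iw n j = 3 * n - 3 + j"
definition bar :: "nat \<Rightarrow> nat \<Rightarrow> nat" where "bar n k = k + cdim n"

definition fzero :: form where "fzero = (\<lambda>_. 0)"
definition fadd :: "form \<Rightarrow> form \<Rightarrow> form" where "fadd a b = (\<lambda>K. a K + b K)"
definition mono :: "nat set \<Rightarrow> form" where "mono I = (\<lambda>K. if K = I then 1 else 0)"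
definition e1 :: "nat \<Rightarrow> form" where "e1 k = mono {k}"

text \<open>sign of e_I ^ e_J = sign * e_{I \<union> J} for disjoint I, J\<close>
definition wsign :: "nat set \<Rightarrow> nat set \<Rightarrow> complex" where
  "wsign I J = (-1) ^ card {(i, j). i \<in> I \<and> j \<in> J \<and> j < i}"

definition wedge :: "form \<Rightarrow> form \<Rightarrow> form" where
  "wedge a b = (\<lambda>K. \<Sum>I\<in>Pow K. a I * b (K - I) * wsign I (K - I))"

definition fpow :: "form \<Rightarrow> nat \<Rightarrow> form" where
  "fpow a k = (wedge a ^^ k) (mono {})"

text \<open>Differentials of the basis 1-forms (structure equations, d = \<partial> + \<partial>bar):
  d dx_j = d dy_j = d dz_j = 0, d omega_1 = dz_1 ^ d(ybar_1),
  d omega_j = dx_{j-1} ^ dy_j + dy_{j-1} ^ d(zbar_{j-1}) for j = 2..n,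
  and the complex conjugate equations for the conjugate forms.\<close>
definition dgen :: "nat \<Rightarrow> nat \<Rightarrow> form" where
  "dgen n k =
    (if k = iw n 1 then wedge (e1 (iz n 1)) (e1 (bar n (iy n 1)))
     else if iw n 2 \<le> k \<and> k \<le> iw n n then
       (let j = k - (3 * n - 3) in
          fadd (wedge (e1 (ix n (j - 1))) (e1 (iy n j)))
               (wedge (e1 (iy n (j - 1))) (e1 (bar n (iz n (j - 1))))))
     else if k = bar n (iw n 1) then wedge (e1 (bar n (iz n 1))) (e1 (iy n 1))
     else if bar n (iw n 2) \<le> k \<and> k \<le> bar n (iw n n) then
       (let j = k - cdim n - (3 * n - 3) in
          fadd (wedge (e1 (bar n (ix n (j - 1)))) (e1 (bar n (iy n j))))
               (wedge (e1 (bar n (iy n (j - 1)))) (e1 (iz n (j - 1)))))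
     else fzero)"

definition dmono :: "nat \<Rightarrow> nat set \<Rightarrow> form" where
  "dmono n I = (\<lambda>K. \<Sum>t\<in>I. (-1) ^ card {s\<in>I. s < t} *
       wedge (mono {s\<in>I. s < t}) (wedge (dgen n t) (mono {s\<in>I. t < s})) K)"

definition dform :: "nat \<Rightarrow> form \<Rightarrow> form" where
  "dform n a = (\<lambda>K. \<Sum>I\<in>Pow {..<2 * cdim n}. a I * dmono n I K)"

definition herm_pos_def :: "nat \<Rightarrow> (nat \<Rightarrow> nat \<Rightarrow> complex) \<Rightarrow> bool" where
  "herm_pos_def N h \<longleftrightarrow>
     (\<forall>j<N. \<forall>k<N. h k j = cnj (h j k)) \<and>
     (\<forall>v::nat \<Rightarrow> complex. (\<exists>j<N. v j \<noteq> 0) \<longrightarrow>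
        0 < Re (\<Sum>j<N. \<Sum>k<N. cnj (v j) * h j k * v k))"

definition fundamental_form :: "nat \<Rightarrow> (nat \<Rightarrow> nat \<Rightarrow> complex) \<Rightarrow> form" where
  "fundamental_form n h =
     (\<lambda>K. \<Sum>j<cdim n. \<Sum>k<cdim n. \<i> * h j k * wedge (e1 j) (e1 (bar n k)) K)"

text \<open>A left-invariant Hermitian metric (given by h in the co-frame) is balanced iff
  d(omega^(N-1)) = 0.\<close>
definition balanced_inv_metric :: "nat \<Rightarrow> (nat \<Rightarrow> nat \<Rightarrow> complex) \<Rightarrow> bool" where
  "balanced_inv_metric n h \<longleftrightarrow>
     herm_pos_def (cdim n) h \<and>
     dform n (fpow (fundamental_form n h) (cdim n - 1)) = fzero"

end

theory Submission imports Defs begin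

lemma wedge_nz: "wedge a b K \<noteq> 0 \<Longrightarrow> \<exists>I\<subseteq>K. a I \<noteq> 0 \<and> b (K-I) \<noteq> 0"
  unfolding wedge_def by (metis (no_types, lifting) PowD mult_eq_0_iff sum.neutral)

lemma mono_nz: "mono A I \<noteq> 0 \<Longrightarrow> I = A" by (simp add: mono_def split: if_splits)

lemma e1e1: "wedge (e1 a) (e1 b) L \<noteq> 0 \<Longrightarrow> L = {a,b} \<and> a \<noteq> b"
proof -
  assume "wedge (e1 a) (e1 b) L \<noteq> 0"
  then obtain I where "I \<subseteq> L" "e1 a I \<noteq> 0" "e1 b (L - I) \<noteq> 0" using wedge_nz by blast
  then have "I = {a}" "L - I = {b}" unfolding e1_def using mono_nz by auto
  then show ?thesis using \<open>I \<subseteq> L\<close> by auto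
qed

lemma fadd_nz: "fadd a b L \<noteq> 0 \<Longrightarrow> a L \<noteq> 0 \<or> b L \<noteq> 0" by (auto simp: fadd_def)

definition goodL :: "nat \<Rightarrow> nat \<Rightarrow> nat set \<Rightarrow> bool" where
 "goodL n t L = (\<exists>a b. L = {a,b} \<and> a \<noteq> b \<and> a < 2 * cdim n \<and> b < 2 * cdim n \<and> a \<noteq> t \<and> b \<noteq> t
     \<and> b \<noteq> a + cdim n \<and> a \<noteq> b + cdim n)"

lemma goodI: "wedge (e1 a) (e1 b) L \<noteq> 0 \<Longrightarrow> a < 2 * cdim n \<Longrightarrow> b < 2 * cdim n \<Longrightarrow> a \<noteq> t \<Longrightarrow> b \<noteq> t
     \<Longrightarrow> b \<noteq> a + cdim n \<Longrightarrow> a \<noteq> b + cdim n \<Longrightarrow> goodL n t L"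
  unfolding goodL_def by (drule e1e1) blast

lemma dgen_nz:
  assumes n: "2 \<le> n" and nz: "dgen n t L \<noteq> 0"
  shows "goodL n t L"
proof -
  have N: "cdim n = 4*n-2" by (simp add: cdim_def)
  show ?thesis
  proof (cases "t = iw n 1")
    case True
    then have "wedge (e1 (iz n 1)) (e1 (bar n (iy n 1))) L \<noteq> 0" using nz by (simp add: dgen_def)
    then show ?thesis by (rule goodI) (use True n in \<open>auto simp: iz_def iy_def iw_def bar_def N\<close>)
  next
    case F1: False
    show ?thesis
    proof (cases "iw n 2 \<le> t \<and> t \<le> iw n n")
      case True
      define j where "j = t - (3*n-3)"
      have "fadd (wedge (e1 (ix n (j - 1))) (e1 (iy n j)))
               (wedge (e1 (iy n (j - 1))) (e1 (bar n (iz n (j - 1))))) L \<noteq> 0"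
        using nz unfolding dgen_def j_def Let_def
        by (simp only: if_not_P[OF F1] if_P[OF True] not_False_eq_True)
      then have "wedge (e1 (ix n (j - 1))) (e1 (iy n j)) L \<noteq> 0 \<or>
                 wedge (e1 (iy n (j - 1))) (e1 (bar n (iz n (j - 1)))) L \<noteq> 0" by (rule fadd_nz)
      then show ?thesis
      proof
        assume "wedge (e1 (ix n (j - 1))) (e1 (iy n j)) L \<noteq> 0"
        then show ?thesis by (rule goodI) (use True n in \<open>auto simp: j_def ix_def iz_def iy_def iw_def bar_def N\<close>)
      next
        assume "wedge (e1 (iy n (j - 1))) (e1 (bar n (iz n (j - 1)))) L \<noteq> 0"
        then show ?thesis by (rule goodI) (use True n in \<open>auto simp: j_def ix_def iz_def iy_def iw_def bar_def N\<close>)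
      qed
    next
      case F2: False
      show ?thesis
      proof (cases "t = bar n (iw n 1)")
        case True
        have "dgen n t = wedge (e1 (bar n (iz n 1))) (e1 (iy n 1))"
          unfolding dgen_def by (simp only: if_not_P[OF F1] if_not_P[OF F2] if_P[OF True] not_False_eq_True)
        then have "wedge (e1 (bar n (iz n 1))) (e1 (iy n 1)) L \<noteq> 0" using nz by simp
        then show ?thesis by (rule goodI) (use True n in \<open>auto simp: iz_def iy_def iw_def bar_def N\<close>)
      next
        case F3: False
        show ?thesis
        proof (cases "bar n (iw n 2) \<le> t \<and> t \<le> bar n (iw n n)")
          case True
          define j where "j = t - cdim n - (3*n-3)"
          have "fadd (wedge (e1 (bar n (ix n (j - 1)))) (e1 (bar n (iy n j))))
               (wedge (e1 (bar n (iy n (j - 1)))) (e1 (iz n (j - 1)))) L \<noteq> 0"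
            using nz unfolding dgen_def j_def Let_def
            by (simp only: if_not_P[OF F1] if_not_P[OF F2] if_not_P[OF F3] if_P[OF True] not_False_eq_True)
          then have "wedge (e1 (bar n (ix n (j - 1)))) (e1 (bar n (iy n j))) L \<noteq> 0 \<or>
                 wedge (e1 (bar n (iy n (j - 1)))) (e1 (iz n (j - 1))) L \<noteq> 0" by (rule fadd_nz)
          then show ?thesis
          proof
            assume "wedge (e1 (bar n (ix n (j - 1)))) (e1 (bar n (iy n j))) L \<noteq> 0"
            then show ?thesis by (rule goodI) (use True n in \<open>auto simp: j_def ix_def iz_def iy_def iw_def bar_def N\<close>)
          next
            assume "wedge (e1 (bar n (iy n (j - 1)))) (e1 (iz n (j - 1))) L \<noteq> 0"
            then show ?thesis by (rule goodI) (use True n in \<open>auto simp: j_def ix_def iz_def iy_def iw_def bar_def N\<close>)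
          qed
        next
          case False
          have "dgen n t = fzero" unfolding dgen_def
            by (simp only: if_not_P[OF F1] if_not_P[OF F2] if_not_P[OF F3] if_not_P[OF False])
          then have False using nz by (simp add: fzero_def)
          then show ?thesis ..
        qed
      qed
    qed
  qed
qed


definition pc :: "nat \<Rightarrow> nat set \<Rightarrow> bool" where
  "pc N L = (L \<subseteq> {..<2*N} \<and> (\<forall>j<N. j \<in> L \<longleftrightarrow> j + N \<in> L))"

definition hid :: "nat \<Rightarrow> nat \<Rightarrow> complex" where "hid j k = (if j = k then 1 else 0)"

lemma ff_nz: "fundamental_form n hid L \<noteq> 0 \<Longrightarrow> \<exists>j<cdim n. L = {j, j + cdim n}"
proof -
  assume "fundamental_form n hid L \<noteq> 0"
  then obtain j k where jk: "j < cdim n" "k < cdim n" "\<i> * hid j k * wedge (e1 j) (e1 (bar n k)) L \<noteq> 0"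
    unfolding fundamental_form_def by (meson lessThan_iff sum.neutral)
  then have "j = k" by (simp add: hid_def split: if_splits)
  moreover have "L = {j, bar n k}" using jk(3) e1e1 by fastforce
  ultimately show ?thesis using jk by (auto simp: bar_def)
qed

lemma fpow_nz:
  assumes N: "0 < cdim n"
  shows "fpow (fundamental_form n hid) m L \<noteq> 0 \<Longrightarrow> pc (cdim n) L \<and> finite L \<and> card L = 2*m"
proof (induction m arbitrary: L)
  case 0
  then have "L = {}" by (simp add: fpow_def mono_def split: if_splits)
  then show ?case by (simp add: pc_def)
next
  case (Suc m)
  have "wedge (fundamental_form n hid) (fpow (fundamental_form n hid) m) L \<noteq> 0"
    using Suc.prems by (simp add: fpow_def)
  then obtain I where I: "I \<subseteq> L" "fundamental_form n hid I \<noteq> 0" "fpow (fundamental_form n hid) m (L - I) \<noteq> 0"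
    using wedge_nz by blast
  from ff_nz[OF I(2)] obtain j where j: "j < cdim n" "I = {j, j + cdim n}" by blast
  from Suc.IH[OF I(3)] have ih: "pc (cdim n) (L - I)" "finite (L - I)" "card (L - I) = 2*m" by auto
  have LI: "L = I \<union> (L - I)" using I(1) by blast
  have fin: "finite L" using ih(2) j(2) LI by (metis finite.emptyI finite.insertI finite_UnI)
  have cI: "card I = 2" using j N by simp
  have "card L = card I + card (L - I)" using I(1) fin
    by (metis card_Diff_subset card_mono diff_add_inverse finite_subset le_add_diff_inverse)
  then have "card L = 2 * Suc m" using cI ih(3) by simp
  moreover have "pc (cdim n) L"
    unfolding pc_def
  proof (intro conjI allI impI)
    show "L \<subseteq> {..<2 * cdim n}"
    proof
      fix x assume "x \<in> L"
      then have "x \<in> I \<or> x \<in> L - I" by blast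
      then show "x \<in> {..<2 * cdim n}" using ih(1) j unfolding pc_def by auto
    qed
  next
    fix i assume i: "i < cdim n"
    have e1: "i \<in> L \<longleftrightarrow> i \<in> I \<or> i \<in> L - I" using I(1) by blast
    have e2: "i + cdim n \<in> L \<longleftrightarrow> i + cdim n \<in> I \<or> i + cdim n \<in> L - I" using I(1) by blast
    have e3: "i \<in> I \<longleftrightarrow> i + cdim n \<in> I" using i j by auto
    have e4: "i \<in> L - I \<longleftrightarrow> i + cdim n \<in> L - I" using i ih(1) unfolding pc_def by blast
    show "i \<in> L \<longleftrightarrow> i + cdim n \<in> L" using e1 e2 e3 e4 by blast
  qed
  ultimately show ?case using fin by blast
qed

lemma key:
  assumes N: "0 < cdim n" and pcI: "pc (cdim n) I" and fin: "finite I"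
    and cI: "card I = 2 * (cdim n - 1)" and t: "t \<in> I" and g: "goodL n t L" and LI: "L \<inter> I \<subseteq> {t}"
  shows False
proof -
  define N where "N = cdim n"
  obtain a b where ab: "L = {a,b}" "a \<noteq> b" "a < 2*N" "b < 2*N" "a \<noteq> t" "b \<noteq> t" "b \<noteq> a + N" "a \<noteq> b + N"
    using g unfolding goodL_def N_def[symmetric] by (elim exE conjE) (rule that; assumption)
  have aI: "a \<notin> I" "b \<notin> I" using ab LI by auto
  define C where "C = {..<2*N} - I"
  have IS: "I \<subseteq> {..<2*N}" using pcI by (simp add: pc_def N_def)
  have "card C = 2*N - card I" unfolding C_def using IS by (simp add: card_Diff_subset fin)
  then have cC: "card C = 2" using cI N by (simp add: N_def)
  have abC: "{a,b} \<subseteq> C" using aI ab unfolding C_def by auto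
  have CC: "C = {a,b}"
  proof -
    have fC: "finite C" unfolding C_def by simp
    have "card {a,b} = 2" using ab(2) by simp
    then have "{a,b} = C" using card_subset_eq[OF fC abC] cC by simp
    then show ?thesis by simp
  qed
  have pcI': "\<forall>j<N. j \<in> I \<longleftrightarrow> j + N \<in> I" using pcI by (simp add: pc_def N_def)
  show False
  proof (cases "a < N")
    case True
    then have "a + N \<in> C" using pcI' aI unfolding C_def by auto
    then show False using CC ab N by (auto simp: N_def)
  next
    case False
    then have aN: "a - N + N = a" by simp
    have "a - N < N" using ab(3) False by arith
    then have "a - N \<in> I \<longleftrightarrow> a - N + N \<in> I" using pcI' by blast
    then have "a - N \<notin> I" using aN aI by simp
    then have "a - N \<in> C" using False ab(3) unfolding C_def by auto
    then show False using CC ab N False by (auto simp: N_def)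
  qed
qed

lemma triple_nz: "wedge (mono A) (wedge X (mono B)) K \<noteq> 0 \<Longrightarrow> \<exists>L. X L \<noteq> 0 \<and> L \<inter> A = {} \<and> L \<inter> B = {}"
proof -
  assume "wedge (mono A) (wedge X (mono B)) K \<noteq> 0"
  then obtain I where I: "I \<subseteq> K" "mono A I \<noteq> 0" "wedge X (mono B) (K - I) \<noteq> 0"
    using wedge_nz by blast
  then have IA: "I = A" using mono_nz by blast
  obtain J where J: "J \<subseteq> K - I" "X J \<noteq> 0" "mono B (K - I - J) \<noteq> 0"
    using wedge_nz[OF I(3)] by (elim exE conjE) (rule that; assumption)
  have "K - I - J = B" by (rule mono_nz[OF J(3)])
  then have "J \<inter> B = {}" by blast
  moreover have "J \<inter> A = {}" using J(1) IA by blast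
  ultimately show ?thesis using J(2) by blast
qed

lemma dmono_nz: "dmono n I K \<noteq> 0 \<Longrightarrow> \<exists>t\<in>I. \<exists>L. dgen n t L \<noteq> 0 \<and> L \<inter> I \<subseteq> {t}"
proof -
  assume "dmono n I K \<noteq> 0"
  assume nz: "dmono n I K \<noteq> 0"
  have "\<exists>t\<in>I. (-1) ^ card {s\<in>I. s < t} *
       wedge (mono {s\<in>I. s < t}) (wedge (dgen n t) (mono {s\<in>I. t < s})) K \<noteq> 0"
  proof (rule ccontr)
    assume "\<not> ?thesis"
    then have "dmono n I K = 0" unfolding dmono_def by (intro sum.neutral) blast
    then show False using nz by simp
  qed
  then obtain t where t: "t \<in> I" "wedge (mono {s\<in>I. s < t}) (wedge (dgen n t) (mono {s\<in>I. t < s})) K \<noteq> 0"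
    by auto
  from triple_nz[OF t(2)] obtain L where L: "dgen n t L \<noteq> 0" "L \<inter> {s\<in>I. s < t} = {}" "L \<inter> {s\<in>I. t < s} = {}" by blast
  have "L \<inter> I \<subseteq> {t}"
  proof
    fix x assume x: "x \<in> L \<inter> I"
    show "x \<in> {t}"
    proof (cases x t rule: linorder_cases)
      case less then show ?thesis using x L(2) by blast
    next
      case greater then show ?thesis using x L(3) by blast
    qed simp
  qed
  then show ?thesis using t(1) L(1) by blast
qed

lemma herm: "herm_pos_def N hid"
  unfolding herm_pos_def_def
proof (intro conjI allI impI)
  fix j k show "hid k j = cnj (hid j k)" by (simp add: hid_def)
next
  fix v :: "nat \<Rightarrow> complex" assume "\<exists>j<N. v j \<noteq> 0"
  then obtain j0 where j0: "j0 < N" "v j0 \<noteq> 0" by blast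
  have "(\<Sum>j<N. \<Sum>k<N. cnj (v j) * hid j k * v k) = (\<Sum>j<N. cnj (v j) * v j)"
  proof (rule sum.cong[OF refl])
    fix j assume "j \<in> {..<N}"
    have "(\<Sum>k<N. cnj (v j) * hid j k * v k) = (\<Sum>k<N. if j = k then cnj (v j) * v k else 0)"
      by (rule sum.cong[OF refl]) (simp add: hid_def)
    also have "\<dots> = cnj (v j) * v j" using \<open>j \<in> {..<N}\<close> by simp
    finally show "(\<Sum>k<N. cnj (v j) * hid j k * v k) = cnj (v j) * v j" .
  qed
  also have "\<dots> = (\<Sum>j<N. complex_of_real ((cmod (v j))\<^sup>2))"
    by (rule sum.cong[OF refl]) (metis complex_norm_square mult.commute of_real_power)
  finally have "Re (\<Sum>j<N. \<Sum>k<N. cnj (v j) * hid j k * v k) = (\<Sum>j<N. (cmod (v j))\<^sup>2)"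
    by (simp add: Re_sum)
  also have "\<dots> > 0"
    by (rule sum_pos2[where i=j0]) (use j0 in auto)
  finally show "0 < Re (\<Sum>j<N. \<Sum>k<N. cnj (v j) * hid j k * v k)" .
qed

theorem theorem3p3:
  fixes n :: nat
  assumes "2 \<le> n"
  shows "\<exists>h. balanced_inv_metric n h"
proof
  have N: "0 < cdim n" using assms by (simp add: cdim_def)
  show "balanced_inv_metric n hid"
    unfolding balanced_inv_metric_def
  proof (intro conjI herm)
    show "dform n (fpow (fundamental_form n hid) (cdim n - 1)) = fzero"
      unfolding dform_def fzero_def
    proof (rule ext, rule sum.neutral, rule ballI)
      fix K I
      show "fpow (fundamental_form n hid) (cdim n - 1) I * dmono n I K = 0"
      proof (rule ccontr)
        assume "\<not> ?thesis"
        then have a: "fpow (fundamental_form n hid) (cdim n - 1) I \<noteq> 0" and b: "dmono n I K \<noteq> 0" by auto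
        from fpow_nz[OF N a] have I: "pc (cdim n) I" "finite I" "card I = 2 * (cdim n - 1)" by auto
        from dmono_nz[OF b] obtain t L where tL: "t \<in> I" "dgen n t L \<noteq> 0" "L \<inter> I \<subseteq> {t}" by blast
        from dgen_nz[OF assms tL(2)] have "goodL n t L" .
        from key[OF N I tL(1) this tL(3)] show False .
      qed
    qed
  qed
qed

end
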